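(* Let $G$, $w$, $\nu$ be as in the context, and let $\mathcal{S}=(S_m)_{m=0,\ldots,n}$ be a partition of $V(G)$ with $K_m(\mathcal{S})>0$ for all $m=0,\ldots,n-1$. Then for all $1\le p<\infty$ and all $f\in\ell^p_\nu(G)$ with $f|_{S_0}=0$, \[ \|f|_{V(G)\setminus S_0}\|_{p,\nu}\le\delta_{\mathcal{S},p}\|\nabla_w f\|_p, \] and for all bounded $f$ with $f|_{S_0}=0$, \[ \|f|_{V(G)\setminus S_0}\|_\infty\le n\,\|\nabla_w f\|_\infty. \]
   Context: $G$ is an undirected weighted graph: $V(G)$ is a (countable) vertex set and $w:V(G)\times V(G)\to[0,\infty)$ is symmetric with $w(u,u)=0$; edges are pairs with $w(u,v)\neq0$. $\nu:V(G)\to(0,\infty)$ is a fixed vertex weight; $\ell^p_\nu(G)$, $\|f\|_{p,\nu}=\left(\sum_v|f(v)|^p\nu(v)\right)^{1/p}$, $\|f|_A\|_{p,\nu}$ the same sum over $v\in A$; $\|f|_A\|_\infty=\sup_{v\in A}|f(v)|$. $\|\nabla_w f\|_p=\left(\sum_{u,v\in V(G)}|f(u)-f(v)|^pw(u,v)\right)^{1/p}$ for $p<\infty$, and $\|\nabla_w f\|_\infty=\sup\{|f(u)-f(v)|: w(u,v)>0\}$. $w_A(v)=\sum_{u\in A}w(u,v)$. $D_m=\sup_{v\in S_m}\frac{w_{S_{m+1}}(v)}{\nu(v)}$, $K_m=\inf_{v\in S_{m+1}}\frac{w_{S_m}(v)}{\nu(v)}$, and $\delta_{\mathcal{S},p}=\max_{k=1,\ldots,n}\left(\frac{1}{K_{k-1}}\sum_{m=k}^n\prod_{i=k}^{m-1}\frac{D_i}{K_i}\right)$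 for $p=1$, $\delta_{\mathcal{S},p}=\left(\sum_{m=1}^n\left(\sum_{k=1}^mK_{k-1}^{-q/p}\left(\prod_{i=k}^{m-1}\frac{D_i}{K_i}\right)^{q/p}\right)^{p/q}\right)^{1/p}$ for $1<p<\infty$, $1/p+1/q=1$. Empty products equal $1$, empty sums equal $0$. *)

theory Defs
  imports "HOL-Analysis.Analysis"
begin

text \<open>Quantities that may be infinite are valued in ennreal = [0,\<infinity>].
  Real powers on [0,\<infinity>] for positive exponents: \<infinity> powr r = \<infinity>.\<close>
definition epowr :: "ennreal \<Rightarrow> real \<Rightarrow> ennreal" where
  "epowr x r = (if x = top then top else ennreal (enn2real x powr r))"

definition wA :: "('v \<Rightarrow> 'v \<Rightarrow> real) \<Rightarrow> 'v set \<Rightarrow> 'v \<Rightarrow> ennreal" where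
  "wA w A v = (\<Sum>\<^sub>\<infinity> u\<in>A. ennreal (w u v))"

definition Dm :: "('v \<Rightarrow> 'v \<Rightarrow> real) \<Rightarrow> ('v \<Rightarrow> real) \<Rightarrow> (nat \<Rightarrow> 'v set) \<Rightarrow> nat \<Rightarrow> ennreal" where
  "Dm w \<nu> S m = (SUP v\<in>S m. wA w (S (Suc m)) v / ennreal (\<nu> v))"

definition Km :: "('v \<Rightarrow> 'v \<Rightarrow> real) \<Rightarrow> ('v \<Rightarrow> real) \<Rightarrow> (nat \<Rightarrow> 'v set) \<Rightarrow> nat \<Rightarrow> ennreal" where
  "Km w \<nu> S m = (INF v\<in>S (Suc m). wA w (S m) v / ennreal (\<nu> v))"

definition delta :: "('v \<Rightarrow> 'v \<Rightarrow> real) \<Rightarrow> ('v \<Rightarrow> real) \<Rightarrow> (nat \<Rightarrow> 'v set) \<Rightarrow> nat \<Rightarrow> real \<Rightarrow> ennreal" where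
  "delta w \<nu> S n p =
    (let D = Dm w \<nu> S; K = Km w \<nu> S in
     if p = 1 then
       (SUP k\<in>{1..n}. (1 / K (k - 1)) * (\<Sum>m=k..n. \<Prod>i=k..<m. D i / K i))
     else
       (let q = p / (p - 1) in
        epowr (\<Sum>m=1..n. epowr (\<Sum>k=1..m. epowr (1 / K (k - 1)) (q / p)
                                     * epowr (\<Prod>i=k..<m. D i / K i) (q / p)) (p / q)) (1 / p)))"

definition pnorm :: "('v \<Rightarrow> real) \<Rightarrow> real \<Rightarrow> 'v set \<Rightarrow> ('v \<Rightarrow> real) \<Rightarrow> ennreal" where
  "pnorm \<nu> p A f = epowr (\<Sum>\<^sub>\<infinity> v\<in>A. ennreal (\<bar>f v\<bar> powr p * \<nu> v)) (1 / p)"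

definition grad_pnorm :: "('v \<Rightarrow> 'v \<Rightarrow> real) \<Rightarrow> real \<Rightarrow> ('v \<Rightarrow> real) \<Rightarrow> ennreal" where
  "grad_pnorm w p f = epowr (\<Sum>\<^sub>\<infinity> (u,v)\<in>UNIV. ennreal (\<bar>f u - f v\<bar> powr p * w u v)) (1 / p)"

definition sup_norm :: "'v set \<Rightarrow> ('v \<Rightarrow> real) \<Rightarrow> ennreal" where
  "sup_norm A f = (SUP v\<in>A. ennreal \<bar>f v\<bar>)"

definition grad_sup_norm :: "('v \<Rightarrow> 'v \<Rightarrow> real) \<Rightarrow> ('v \<Rightarrow> real) \<Rightarrow> ennreal" where
  "grad_sup_norm w f = (SUP (u,v)\<in>{(u,v). w u v > 0}. ennreal \<bar>f u - f v\<bar>)"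

end

theory Submission
  imports Defs
begin


lemma infsum_nat_ennreal:
  fixes h :: "nat \<Rightarrow> ennreal"
  shows "infsum h UNIV = suminf h"
proof -
  have "infsum h UNIV = (SUP F\<in>{F. finite F \<and> F \<subseteq> UNIV}. sum h F)"
    by (rule nonneg_infsum_complete) simp
  also have "\<dots> = (SUP n. \<Sum>i<n. h i)"
  proof (rule antisym)
    show "(SUP F\<in>{F. finite F \<and> F \<subseteq> UNIV}. sum h F) \<le> (SUP n. \<Sum>i<n. h i)"
    proof (rule SUP_least)
      fix F :: "nat set" assume "F \<in> {F. finite F \<and> F \<subseteq> UNIV}"
      then have fF: "finite F" by simp
      then have "F \<subseteq> {..<Suc (Max F)}"
        by (auto simp: less_Suc_eq_le)
      then have "sum h F \<le> (\<Sum>i<Suc (Max F). h i)"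
        by (intro sum_mono2) auto
      also have "\<dots> \<le> (SUP n. \<Sum>i<n. h i)" by (rule SUP_upper) simp
      finally show "sum h F \<le> (SUP n. \<Sum>i<n. h i)" .
    qed
    show "(SUP n. \<Sum>i<n. h i) \<le> (SUP F\<in>{F. finite F \<and> F \<subseteq> UNIV}. sum h F)"
      by (rule SUP_least, rule SUP_upper) auto
  qed
  also have "\<dots> = suminf h" by (rule suminf_eq_SUP[symmetric])
  finally show ?thesis .
qed

lemma infsum_UNIV_nn:
  fixes g :: "'a::countable \<Rightarrow> ennreal"
  shows "infsum g UNIV = (\<integral>\<^sup>+x. g x \<partial>count_space UNIV)"
proof (cases "finite (UNIV :: 'a set)")
  case True
  then show ?thesis by (simp add: nn_integral_count_space_finite)
next
  case False
  have bij: "bij_betw (from_nat_into (UNIV::'a set)) UNIV UNIV"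
    by (rule bij_betw_from_nat_into) (use False in auto)
  have "infsum g UNIV = infsum (\<lambda>i. g (from_nat_into UNIV i)) UNIV"
    by (rule infsum_reindex_bij_betw[OF bij, symmetric])
  also have "\<dots> = suminf (\<lambda>i. g (from_nat_into UNIV i))"
    by (rule infsum_nat_ennreal)
  also have "\<dots> = (\<integral>\<^sup>+i. g (from_nat_into UNIV i) \<partial>count_space UNIV)"
    by (rule nn_integral_count_space_nat[symmetric])
  also have "\<dots> = (\<integral>\<^sup>+x. g x \<partial>count_space UNIV)"
    by (rule nn_integral_bij_count_space[OF bij])
  finally show ?thesis .
qed

lemma infsum_nn:
  fixes h :: "'a::countable \<Rightarrow> ennreal"
  shows "infsum h A = (\<integral>\<^sup>+x. indicator A x * h x \<partial>count_space UNIV)"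
proof -
  have "infsum h A = infsum (\<lambda>x. indicator A x * h x) UNIV"
    by (rule infsum_cong_neutral) (auto simp: indicator_def)
  then show ?thesis by (simp add: infsum_UNIV_nn)
qed



lemma epowr_ennreal: "0 \<le> a \<Longrightarrow> epowr (ennreal a) t = ennreal (a powr t)"
  by (simp add: epowr_def)

lemma epowr_top[simp]: "epowr top t = top"
  by (simp add: epowr_def)

lemma epowr_0[simp]: "epowr 0 t = 0"
  by (simp add: epowr_def)

lemma epowr_1[simp]: "epowr 1 t = 1"
  by (simp add: epowr_def)

lemma epowr_one[simp]: "epowr x 1 = x"
  by (cases x rule: ennreal_cases) (auto simp: epowr_def)

lemma epowr_mult:
  assumes "t > 0"
  shows "epowr (x * y) t = epowr x t * epowr y t"
proof (cases x rule: ennreal_cases)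
  case (real a)
  show ?thesis
  proof (cases y rule: ennreal_cases)
    case (real b)
    then show ?thesis using \<open>x = ennreal a\<close> \<open>0 \<le> a\<close>
      by (simp add: epowr_def ennreal_mult[symmetric] powr_mult)
  next
    case top
    then show ?thesis using \<open>x = ennreal a\<close> \<open>0 \<le> a\<close> assms
      by (cases "a = 0") (auto simp: epowr_def ennreal_mult_top ennreal_top_mult)
  qed
next
  case top
  then show ?thesis using assms
    by (cases y rule: ennreal_cases) (auto simp: epowr_def ennreal_mult_top ennreal_top_mult)
qed

lemma epowr_epowr:
  shows "epowr (epowr x s) t = epowr x (s * t)"
  by (cases x rule: ennreal_cases) (auto simp: epowr_def powr_powr)

lemma epowr_mono:
  assumes "t > 0" "x \<le> y"
  shows "epowr x t \<le> epowr y t"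
  using assms
  by (cases x rule: ennreal_cases; cases y rule: ennreal_cases)
     (auto simp: epowr_def powr_mono2 top_unique)

lemma epowr_eq_0_iff:
  assumes "t > 0" shows "epowr x t = 0 \<longleftrightarrow> x = 0"
  using assms by (cases x rule: ennreal_cases) (auto simp: epowr_def)

lemma epowr_eq_top_iff:
  shows "epowr x t = top \<longleftrightarrow> x = top"
  by (cases x rule: ennreal_cases) (auto simp: epowr_def)

lemma epowr_prod:
  assumes "t > 0"
  shows "epowr (\<Prod>i\<in>I. x i) t = (\<Prod>i\<in>I. epowr (x i) t)"
proof (cases "finite I")
  case True
  then show ?thesis by (induction I rule: finite_induct) (auto simp: epowr_mult[OF assms])
qed simp



lemma holder_real:
  fixes x y :: "'i \<Rightarrow> real"
  assumes fin: "finite I" and pq: "p > 1" "q > 1" "1/p + 1/q = 1"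
    and nn: "\<And>k. k \<in> I \<Longrightarrow> 0 \<le> x k" "\<And>k. k \<in> I \<Longrightarrow> 0 \<le> y k"
  shows "(\<Sum>k\<in>I. x k * y k) \<le> (\<Sum>k\<in>I. x k powr q) powr (1/q) * (\<Sum>k\<in>I. y k powr p) powr (1/p)"
proof -
  define SX where "SX = (\<Sum>k\<in>I. x k powr q)"
  define SY where "SY = (\<Sum>k\<in>I. y k powr p)"
  have SX0: "SX \<ge> 0" "SY \<ge> 0" unfolding SX_def SY_def by (auto intro: sum_nonneg)
  show ?thesis
  proof (cases "SX = 0 \<or> SY = 0")
    case True
    then have "(\<forall>k\<in>I. x k powr q = 0) \<or> (\<forall>k\<in>I. y k powr p = 0)"
      unfolding SX_def SY_def using fin by (subst (asm) (1 2) sum_nonneg_eq_0_iff) auto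
    then have "(\<forall>k\<in>I. x k = 0) \<or> (\<forall>k\<in>I. y k = 0)" by simp
    then have "(\<Sum>k\<in>I. x k * y k) = 0" by auto
    then show ?thesis using SX0 unfolding SX_def SY_def by simp
  next
    case False
    then have pos: "SX > 0" "SY > 0" using SX0 by auto
    define X where "X = SX powr (1/q)"
    define Y where "Y = SY powr (1/p)"
    have XY: "X > 0" "Y > 0" using pos unfolding X_def Y_def by auto
    have Xq: "X powr q = SX" unfolding X_def using pos pq by (simp add: powr_powr)
    have Yp: "Y powr p = SY" unfolding Y_def using pos pq by (simp add: powr_powr)
    have "(x k / X) * (y k / Y) \<le> (x k / X) powr q / q + (y k / Y) powr p / p" if "k \<in> I" for k
      using Youngs_inequality[of q p "x k / X" "y k / Y"] pq nn that XY by (auto simp: add.commute)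
    then have "(\<Sum>k\<in>I. (x k / X) * (y k / Y)) \<le> (\<Sum>k\<in>I. (x k / X) powr q / q + (y k / Y) powr p / p)"
      by (rule sum_mono)
    also have "\<dots> = (\<Sum>k\<in>I. x k powr q) / X powr q / q + (\<Sum>k\<in>I. y k powr p) / Y powr p / p"
      using nn XY by (simp add: sum.distrib powr_divide sum_divide_distrib)
    also have "\<dots> = 1/q + 1/p" using Xq Yp pos unfolding SX_def SY_def by simp
    also have "\<dots> = 1" using pq by simp
    finally have "(\<Sum>k\<in>I. x k * y k) / (X * Y) \<le> 1"
      by (simp add: sum_divide_distrib)
    then have "(\<Sum>k\<in>I. x k * y k) \<le> X * Y" using XY by (simp add: divide_le_eq)
    then show ?thesis unfolding X_def Y_def SX_def SY_def .
  qed
qed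

lemma holder_ennreal:
  fixes x y :: "'i \<Rightarrow> ennreal"
  assumes fin: "finite I" and pq: "p > 1" "q > 1" "1/p + 1/q = 1"
  shows "(\<Sum>k\<in>I. x k * y k) \<le> epowr (\<Sum>k\<in>I. epowr (x k) q) (1/q) * epowr (\<Sum>k\<in>I. epowr (y k) p) (1/p)"
proof (cases "(\<forall>k\<in>I. x k = 0) \<or> (\<forall>k\<in>I. y k = 0)")
  case True
  then have "(\<Sum>k\<in>I. x k * y k) = 0" by auto
  then show ?thesis by simp
next
  case False
  then obtain k1 k2 where k: "k1 \<in> I" "x k1 \<noteq> 0" "k2 \<in> I" "y k2 \<noteq> 0" by auto
  have tq: "1/q > 0" "1/p > 0" using pq by auto
  have SXpos: "epowr (\<Sum>k\<in>I. epowr (x k) q) (1/q) \<noteq> 0"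
  proof -
    have "epowr (x k1) q \<le> (\<Sum>k\<in>I. epowr (x k) q)"
      using fin k by (intro member_le_sum) auto
    moreover have "epowr (x k1) q \<noteq> 0" using k pq by (simp add: epowr_eq_0_iff)
    ultimately show ?thesis using tq by (auto simp: epowr_eq_0_iff)
  qed
  have SYpos: "epowr (\<Sum>k\<in>I. epowr (y k) p) (1/p) \<noteq> 0"
  proof -
    have "epowr (y k2) p \<le> (\<Sum>k\<in>I. epowr (y k) p)"
      using fin k by (intro member_le_sum) auto
    moreover have "epowr (y k2) p \<noteq> 0" using k pq by (simp add: epowr_eq_0_iff)
    ultimately show ?thesis using tq by (auto simp: epowr_eq_0_iff)
  qed
  show ?thesis
  proof (cases "(\<exists>k\<in>I. x k = top) \<or> (\<exists>k\<in>I. y k = top)")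
    case True
    then show ?thesis
    proof
      assume "\<exists>k\<in>I. x k = top"
      then obtain k where "k \<in> I" "x k = top" by auto
      then have "top \<le> (\<Sum>k\<in>I. epowr (x k) q)"
        using fin by (metis epowr_top member_le_sum zero_le)
      then have "(\<Sum>k\<in>I. epowr (x k) q) = top" by (simp add: top_unique)
      then show ?thesis using SYpos by (simp add: ennreal_top_mult)
    next
      assume "\<exists>k\<in>I. y k = top"
      then obtain k where "k \<in> I" "y k = top" by auto
      then have "top \<le> (\<Sum>k\<in>I. epowr (y k) p)"
        using fin by (metis epowr_top member_le_sum zero_le)
      then have "(\<Sum>k\<in>I. epowr (y k) p) = top" by (simp add: top_unique)
      then show ?thesis using SXpos by (simp add: ennreal_mult_top)
    qed
  next
    case False
    define a where "a k = enn2real (x k)" for k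
    define b where "b k = enn2real (y k)" for k
    have xa: "x k = ennreal (a k)" "y k = ennreal (b k)" if "k \<in> I" for k
      using False that unfolding a_def b_def by (auto simp: less_top[symmetric])
    have ab: "a k \<ge> 0" "b k \<ge> 0" for k unfolding a_def b_def by auto
    have "(\<Sum>k\<in>I. x k * y k) = (\<Sum>k\<in>I. ennreal (a k * b k))"
      by (rule sum.cong) (simp_all add: xa ab ennreal_mult)
    also have "\<dots> = ennreal (\<Sum>k\<in>I. a k * b k)"
      by (rule sum_ennreal) (simp add: ab)
    also have "\<dots> \<le> ennreal ((\<Sum>k\<in>I. a k powr q) powr (1/q) * (\<Sum>k\<in>I. b k powr p) powr (1/p))"
      by (rule ennreal_leI, rule holder_real) (use fin pq ab in auto)
    also have "\<dots> = epowr (\<Sum>k\<in>I. epowr (x k) q) (1/q) * epowr (\<Sum>k\<in>I. epowr (y k) p) (1/p)"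
    proof -
      have sx: "(\<Sum>k\<in>I. epowr (x k) q) = ennreal (\<Sum>k\<in>I. a k powr q)"
        by (subst sum_ennreal[symmetric]) (auto intro!: sum.cong simp: xa ab epowr_ennreal)
      have sy: "(\<Sum>k\<in>I. epowr (y k) p) = ennreal (\<Sum>k\<in>I. b k powr p)"
        by (subst sum_ennreal[symmetric]) (auto intro!: sum.cong simp: xa ab epowr_ennreal)
      show ?thesis unfolding sx sy
        by (simp add: epowr_ennreal sum_nonneg ennreal_mult)
    qed
    finally show ?thesis .
  qed
qed



lemma powr_ge1_aux: "0 < (l::real) \<Longrightarrow> l < 1 \<Longrightarrow> 1 \<le> p \<Longrightarrow> 1 \<le> l powr (1 - p)"
proof -
  assume a: "0 < (l::real)" "l < 1" "1 \<le> p"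
  have "1 \<le> (1/l) powr (p - 1)" using a by (intro ge_one_powr_ge_zero) auto
  also have "(1/l) powr (p - 1) = l powr (1 - p)" using a by (simp add: powr_divide powr_diff)
  finally show ?thesis .
qed

lemma conv_ineq:
  fixes a b l p :: real
  assumes ab: "0 \<le> a" "0 \<le> b" and l: "0 < l" "l < 1" and p: "1 \<le> p"
  shows "(a + b) powr p \<le> l powr (1 - p) * a powr p + (1 - l) powr (1 - p) * b powr p"
proof (cases "a = 0 \<or> b = 0")
  case True
  have ge1: "1 \<le> l powr (1 - p)" "1 \<le> (1 - l) powr (1 - p)"
    using l p by (auto intro!: powr_ge1_aux)
  show ?thesis
  proof (cases "a = 0")
    case True
    have "b powr p \<le> (1 - l) powr (1 - p) * b powr p"
      using ge1 by (simp add: mult_le_cancel_right1)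
    then show ?thesis using True by simp
  next
    case False
    then have "b = 0" using \<open>a = 0 \<or> b = 0\<close> by simp
    have "a powr p \<le> l powr (1 - p) * a powr p"
      using ge1 by (simp add: mult_le_cancel_right1)
    then show ?thesis using \<open>b = 0\<close> by simp
  qed
next
  case False
  then have pos: "a > 0" "b > 0" using ab by auto
  have cv: "convex_on {0<..} (\<lambda>x::real. x powr p)" by (rule powr_convex[OF p])
  have "((1 - (1 - l)) *\<^sub>R (a / l) + (1 - l) *\<^sub>R (b / (1 - l))) powr p
        \<le> (1 - (1 - l)) * (a / l) powr p + (1 - l) * (b / (1 - l)) powr p"
    by (rule convex_onD[OF cv]) (use l pos in auto)
  moreover have "(1 - (1 - l)) *\<^sub>R (a / l) + (1 - l) *\<^sub>R (b / (1 - l)) = a + b"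
    using l by simp
  moreover have "l * (a / l) powr p = l powr (1 - p) * a powr p"
    using l pos by (simp add: powr_divide powr_diff)
  moreover have "(1 - l) * (b / (1 - l)) powr p = (1 - l) powr (1 - p) * b powr p"
    using l pos by (simp add: powr_divide powr_diff)
  ultimately show ?thesis by simp
qed

lemma alg_identity:
  fixes sa sb p :: real
  assumes "sa > 0" "sb > 0" "p \<ge> 1"
  shows "(sa / (sa + sb)) powr (1 - p) * sa powr p = (sa + sb) powr (p - 1) * sa"
proof -
  have s: "sa + sb > 0" using assms by simp
  have "(sa / (sa + sb)) powr (1 - p) * sa powr p = sa powr (1 - p) * sa powr p / (sa + sb) powr (1 - p)"
    using assms s by (simp add: powr_divide)
  also have "sa powr (1 - p) * sa powr p = sa"
    using assms by (simp add: powr_add[symmetric])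
  also have "sa / (sa + sb) powr (1 - p) = (sa + sb) powr (p - 1) * sa"
    using s by (simp add: powr_minus_divide[symmetric] powr_diff divide_simps)
  finally show ?thesis .
qed




abbreviation csum :: "('a \<Rightarrow> ennreal) \<Rightarrow> ennreal" where
  "csum h \<equiv> (\<integral>\<^sup>+x. h x \<partial>count_space UNIV)"

lemma csum_0_iff: "csum h = 0 \<longleftrightarrow> (\<forall>x. h x = 0)"
  by (simp add: nn_integral_0_iff_AE AE_count_space)

lemma mink:
  fixes c :: "'a \<Rightarrow> ennreal" and \<alpha> \<beta> :: "'a \<Rightarrow> real"
  assumes p: "p \<ge> 1" and nn: "\<And>x. 0 \<le> \<alpha> x" "\<And>x. 0 \<le> \<beta> x"
  shows "epowr (csum (\<lambda>x. c x * ennreal ((\<alpha> x + \<beta> x) powr p))) (1/p)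
      \<le> epowr (csum (\<lambda>x. c x * ennreal (\<alpha> x powr p))) (1/p)
       + epowr (csum (\<lambda>x. c x * ennreal (\<beta> x powr p))) (1/p)"
    (is "epowr ?L _ \<le> epowr ?A _ + epowr ?B _")
proof -
  have tp: "1/p > 0" using p by simp
  consider "?A = 0" | "?B = 0" | "?A = top \<or> ?B = top" | "?A \<noteq> 0" "?B \<noteq> 0" "?A \<noteq> top" "?B \<noteq> top"
    by blast
  then show ?thesis
  proof cases
    case 1
    then have z: "\<And>x. c x * ennreal (\<alpha> x powr p) = 0" by (simp add: csum_0_iff)
    have "c x * ennreal ((\<alpha> x + \<beta> x) powr p) = c x * ennreal (\<beta> x powr p)" for x
    proof -
      from z[of x] have "c x = 0 \<or> \<alpha> x = 0" using nn[of x]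
        by (auto simp: ennreal_eq_0_iff)
      then show ?thesis by auto
    qed
    then have "?L = ?B" by simp
    then show ?thesis by simp
  next
    case 2
    then have z: "\<And>x. c x * ennreal (\<beta> x powr p) = 0" by (simp add: csum_0_iff)
    have "c x * ennreal ((\<alpha> x + \<beta> x) powr p) = c x * ennreal (\<alpha> x powr p)" for x
    proof -
      from z[of x] have "c x = 0 \<or> \<beta> x = 0" using nn[of x]
        by (auto simp: ennreal_eq_0_iff)
      then show ?thesis by auto
    qed
    then have "?L = ?A" by simp
    then show ?thesis by simp
  next
    case 3
    then show ?thesis by auto
  next
    case 4
    define a where "a = enn2real ?A"
    define b where "b = enn2real ?B"
    have Aa: "?A = ennreal a" and Bb: "?B = ennreal b"
      using 4 unfolding a_def b_def by (auto simp: less_top[symmetric])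
    have "a \<ge> 0" "b \<ge> 0" unfolding a_def b_def by auto
    moreover have "a \<noteq> 0" "b \<noteq> 0" using 4(1,2) Aa Bb by auto
    ultimately have apos: "a > 0" "b > 0" by auto
    define sa where "sa = a powr (1/p)"
    define sb where "sb = b powr (1/p)"
    have spos: "sa > 0" "sb > 0" using apos unfolding sa_def sb_def by auto
    have asa: "a = sa powr p" "b = sb powr p" using apos p unfolding sa_def sb_def by (auto simp: powr_powr)
    define l where "l = sa / (sa + sb)"
    have l: "0 < l" "l < 1" using spos unfolding l_def by (auto simp: divide_simps)
    have one_l: "1 - l = sb / (sa + sb)" using spos unfolding l_def by (simp add: divide_simps)
    have "?L \<le> csum (\<lambda>x. ennreal (l powr (1 - p)) * (c x * ennreal (\<alpha> x powr p))
                        + ennreal ((1 - l) powr (1 - p)) * (c x * ennreal (\<beta> x powr p)))"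
    proof (rule nn_integral_mono)
      fix x
      have "ennreal ((\<alpha> x + \<beta> x) powr p) \<le> ennreal (l powr (1 - p) * \<alpha> x powr p + (1 - l) powr (1 - p) * \<beta> x powr p)"
        by (rule ennreal_leI, rule conv_ineq) (use nn l p in auto)
      also have "\<dots> = ennreal (l powr (1 - p)) * ennreal (\<alpha> x powr p) + ennreal ((1 - l) powr (1 - p)) * ennreal (\<beta> x powr p)"
        by (simp add: ennreal_plus ennreal_mult)
      finally have "c x * ennreal ((\<alpha> x + \<beta> x) powr p) \<le> c x * (ennreal (l powr (1 - p)) * ennreal (\<alpha> x powr p) + ennreal ((1 - l) powr (1 - p)) * ennreal (\<beta> x powr p))"
        by (rule mult_left_mono) simp
      then show "c x * ennreal ((\<alpha> x + \<beta> x) powr p) \<le> ennreal (l powr (1 - p)) * (c x * ennreal (\<alpha> x powr p))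
                        + ennreal ((1 - l) powr (1 - p)) * (c x * ennreal (\<beta> x powr p))"
        by (simp add: algebra_simps)
    qed
    also have "\<dots> = ennreal (l powr (1 - p)) * ?A + ennreal ((1 - l) powr (1 - p)) * ?B"
      by (simp add: nn_integral_add nn_integral_cmult)
    also have "\<dots> = ennreal (l powr (1 - p) * a + (1 - l) powr (1 - p) * b)"
    proof -
      have "ennreal (l powr (1 - p) * a + (1 - l) powr (1 - p) * b) = ennreal (l powr (1 - p) * a) + ennreal ((1 - l) powr (1 - p) * b)"
        by (rule ennreal_plus) (use apos in auto)
      then show ?thesis using apos by (simp add: Aa Bb ennreal_mult)
    qed
    also have "l powr (1 - p) * a + (1 - l) powr (1 - p) * b = (sa + sb) powr (p - 1) * sa + (sa + sb) powr (p - 1) * sb"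
      unfolding one_l unfolding asa l_def
      using alg_identity[OF spos p] alg_identity[OF spos(2,1) p] by (simp add: add.commute)
    also have "\<dots> = (sa + sb) powr p"
      using spos by (simp add: distrib_left[symmetric] powr_diff divide_simps powr_one_gt_zero_iff)
    finally have "?L \<le> ennreal ((sa + sb) powr p)" .
    then have "epowr ?L (1/p) \<le> epowr (ennreal ((sa + sb) powr p)) (1/p)"
      by (rule epowr_mono[OF tp])
    also have "\<dots> = ennreal (sa + sb)"
      using spos p by (simp add: epowr_ennreal powr_powr)
    also have "\<dots> = epowr ?A (1/p) + epowr ?B (1/p)"
      using spos apos by (simp add: Aa Bb epowr_ennreal sa_def sb_def ennreal_plus)
    finally show ?thesis .
  qed
qed



definition FF :: "('v \<Rightarrow> real) \<Rightarrow> real \<Rightarrow> 'v set \<Rightarrow> ('v \<Rightarrow> real) \<Rightarrow> ennreal" where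
  "FF \<nu> p A f = csum (\<lambda>v. indicator A v * ennreal (\<bar>f v\<bar> powr p * \<nu> v))"

definition cw :: "('v \<Rightarrow> 'v \<Rightarrow> real) \<Rightarrow> 'v set \<Rightarrow> 'v set \<Rightarrow> 'v \<times> 'v \<Rightarrow> ennreal" where
  "cw w A B x = indicator A (fst x) * indicator B (snd x) * ennreal (w (fst x) (snd x))"

definition GG :: "('v \<Rightarrow> 'v \<Rightarrow> real) \<Rightarrow> real \<Rightarrow> 'v set \<Rightarrow> 'v set \<Rightarrow> ('v \<Rightarrow> real) \<Rightarrow> ennreal" where
  "GG w p A B f = csum (\<lambda>x. cw w A B x * ennreal (\<bar>f (fst x) - f (snd x)\<bar> powr p))"

lemma meas_cs[measurable]: "h \<in> borel_measurable (count_space UNIV)"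
  by simp

lemma wA_csum: "wA (w :: 'v::countable \<Rightarrow> 'v \<Rightarrow> real) A v = csum (\<lambda>u. indicator A u * ennreal (w u v))"
  unfolding wA_def by (rule infsum_nn)

lemma div_times_cancel: "0 < c \<Longrightarrow> x / ennreal c * ennreal c = x"
  by (simp add: ennreal_divide_times)

lemma step_lemma:
  fixes w :: "'v::countable \<Rightarrow> 'v \<Rightarrow> real" and \<nu> :: "'v \<Rightarrow> real" and S :: "nat \<Rightarrow> 'v set"
  assumes w_nonneg: "\<And>u v. 0 \<le> w u v"
    and w_sym: "\<And>u v. w u v = w v u"
    and \<nu>_pos: "\<And>v. 0 < \<nu> v"
    and p: "1 \<le> p"
  shows "epowr (Km w \<nu> S m * FF \<nu> p (S (Suc m)) f) (1/p)
    \<le> epowr (GG w p (S m) (S (Suc m)) f) (1/p) + epowr (Dm w \<nu> S m * FF \<nu> p (S m) f) (1/p)"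
proof -
  let ?A = "S m" and ?B = "S (Suc m)"
  let ?c = "cw w ?A ?B"
  define \<alpha> where "\<alpha> (x::'v\<times>'v) = \<bar>f (fst x) - f (snd x)\<bar>" for x
  define \<beta> where "\<beta> (x::'v\<times>'v) = \<bar>f (fst x)\<bar>" for x
  have tp: "1/p > 0" using p by simp
  have a: "Km w \<nu> S m * FF \<nu> p ?B f \<le> csum (\<lambda>x. ?c x * ennreal ((\<alpha> x + \<beta> x) powr p))"
  proof -
    have "Km w \<nu> S m * FF \<nu> p ?B f = csum (\<lambda>v. Km w \<nu> S m * (indicator ?B v * ennreal (\<bar>f v\<bar> powr p * \<nu> v)))"
      unfolding FF_def by (rule nn_integral_cmult[symmetric]) simp
    also have "\<dots> \<le> csum (\<lambda>v. csum (\<lambda>u. ?c (u, v) * ennreal (\<bar>f v\<bar> powr p)))"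
    proof (rule nn_integral_mono)
      fix v
      show "Km w \<nu> S m * (indicator ?B v * ennreal (\<bar>f v\<bar> powr p * \<nu> v)) \<le> csum (\<lambda>u. ?c (u, v) * ennreal (\<bar>f v\<bar> powr p))"
      proof (cases "v \<in> ?B")
        case False
        then show ?thesis by simp
      next
        case True
        have "Km w \<nu> S m \<le> wA w ?A v / ennreal (\<nu> v)"
          unfolding Km_def using True by (rule INF_lower)
        then have "Km w \<nu> S m * ennreal (\<nu> v) \<le> wA w ?A v / ennreal (\<nu> v) * ennreal (\<nu> v)"
          by (rule mult_right_mono) simp
        also have "\<dots> = wA w ?A v" using \<nu>_pos by (rule div_times_cancel)
        finally have K: "Km w \<nu> S m * ennreal (\<nu> v) \<le> wA w ?A v" .
        have "Km w \<nu> S m * (indicator ?B v * ennreal (\<bar>f v\<bar> powr p * \<nu> v))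
            = (Km w \<nu> S m * ennreal (\<nu> v)) * ennreal (\<bar>f v\<bar> powr p)"
          using True \<nu>_pos[of v] by (simp add: ennreal_mult mult.assoc mult.commute mult.left_commute)
        also have "\<dots> \<le> wA w ?A v * ennreal (\<bar>f v\<bar> powr p)"
          using K by (rule mult_right_mono) simp
        also have "\<dots> = csum (\<lambda>u. indicator ?A u * ennreal (w u v) * ennreal (\<bar>f v\<bar> powr p))"
          unfolding wA_csum by (rule nn_integral_multc[symmetric]) simp
        also have "\<dots> = csum (\<lambda>u. ?c (u, v) * ennreal (\<bar>f v\<bar> powr p))"
          using True by (simp add: cw_def)
        finally show ?thesis .
      qed
    qed
    also have "\<dots> = csum (\<lambda>x. ?c x * ennreal (\<bar>f (snd x)\<bar> powr p))"
      using nn_integral_snd_count_space[of "\<lambda>x. ?c x * ennreal (\<bar>f (snd x)\<bar> powr p)"] by simp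
    also have "\<dots> \<le> csum (\<lambda>x. ?c x * ennreal ((\<alpha> x + \<beta> x) powr p))"
    proof (rule nn_integral_mono)
      fix x :: "'v \<times> 'v"
      have "\<bar>f (snd x)\<bar> \<le> \<alpha> x + \<beta> x" unfolding \<alpha>_def \<beta>_def by linarith
      then have "\<bar>f (snd x)\<bar> powr p \<le> (\<alpha> x + \<beta> x) powr p"
        using p by (intro powr_mono2) auto
      then show "?c x * ennreal (\<bar>f (snd x)\<bar> powr p) \<le> ?c x * ennreal ((\<alpha> x + \<beta> x) powr p)"
        by (intro mult_left_mono ennreal_leI) auto
    qed
    finally show ?thesis .
  qed
  have b: "csum (\<lambda>x. ?c x * ennreal (\<beta> x powr p)) \<le> Dm w \<nu> S m * FF \<nu> p ?A f"
  proof -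
    have "csum (\<lambda>x. ?c x * ennreal (\<beta> x powr p)) = csum (\<lambda>u. csum (\<lambda>v. ?c (u, v) * ennreal (\<bar>f u\<bar> powr p)))"
      using nn_integral_fst_count_space[of "\<lambda>x. ?c x * ennreal (\<beta> x powr p)"] by (simp add: \<beta>_def)
    also have "\<dots> \<le> csum (\<lambda>u. Dm w \<nu> S m * (indicator ?A u * ennreal (\<bar>f u\<bar> powr p * \<nu> u)))"
    proof (rule nn_integral_mono)
      fix u
      show "csum (\<lambda>v. ?c (u, v) * ennreal (\<bar>f u\<bar> powr p)) \<le> Dm w \<nu> S m * (indicator ?A u * ennreal (\<bar>f u\<bar> powr p * \<nu> u))"
      proof (cases "u \<in> ?A")
        case False
        then show ?thesis by (simp add: cw_def)
      next
        case True
        have "wA w ?B u / ennreal (\<nu> u) \<le> Dm w \<nu> S m"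
          unfolding Dm_def using True by (rule SUP_upper)
        then have "wA w ?B u / ennreal (\<nu> u) * ennreal (\<nu> u) \<le> Dm w \<nu> S m * ennreal (\<nu> u)"
          by (rule mult_right_mono) simp
        then have D: "wA w ?B u \<le> Dm w \<nu> S m * ennreal (\<nu> u)"
          using \<nu>_pos by (simp add: div_times_cancel)
        have "csum (\<lambda>v. ?c (u, v) * ennreal (\<bar>f u\<bar> powr p)) = csum (\<lambda>v. indicator ?B v * ennreal (w v u) * ennreal (\<bar>f u\<bar> powr p))"
          using True by (intro nn_integral_cong) (simp add: cw_def w_sym[of u])
        also have "\<dots> = wA w ?B u * ennreal (\<bar>f u\<bar> powr p)"
          unfolding wA_csum by (rule nn_integral_multc) simp
        also have "\<dots> \<le> Dm w \<nu> S m * ennreal (\<nu> u) * ennreal (\<bar>f u\<bar> powr p)"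
          using D by (rule mult_right_mono) simp
        also have "\<dots> = Dm w \<nu> S m * (indicator ?A u * ennreal (\<bar>f u\<bar> powr p * \<nu> u))"
          using True \<nu>_pos[of u] by (simp add: ennreal_mult mult.assoc mult.commute mult.left_commute)
        finally show ?thesis .
      qed
    qed
    also have "\<dots> = Dm w \<nu> S m * FF \<nu> p ?A f"
      unfolding FF_def by (rule nn_integral_cmult) simp
    finally show ?thesis .
  qed
  have "epowr (Km w \<nu> S m * FF \<nu> p ?B f) (1/p) \<le> epowr (csum (\<lambda>x. ?c x * ennreal ((\<alpha> x + \<beta> x) powr p))) (1/p)"
    by (rule epowr_mono[OF tp a])
  also have "\<dots> \<le> epowr (csum (\<lambda>x. ?c x * ennreal (\<alpha> x powr p))) (1/p) + epowr (csum (\<lambda>x. ?c x * ennreal (\<beta> x powr p))) (1/p)"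
    by (rule mink) (use p in \<open>auto simp: \<alpha>_def \<beta>_def\<close>)
  also have "\<dots> \<le> epowr (GG w p ?A ?B f) (1/p) + epowr (Dm w \<nu> S m * FF \<nu> p ?A f) (1/p)"
    unfolding GG_def \<alpha>_def by (intro add_left_mono epowr_mono[OF tp b])
  finally show ?thesis .
qed



lemma inv_K_cancel:
  fixes K :: ennreal
  assumes "0 < K" "K < top"
  shows "1 / K * (K * x) = x"
proof -
  have "1 / K * K = 1" using assms by (simp add: ennreal_divide_times)
  then show ?thesis by (metis mult.assoc mult_1)
qed

lemma rec_lemma:
  fixes K D G F F' :: ennreal
  assumes K: "0 < K" "K < top" and p: "1 \<le> p"
    and st: "epowr (K * F') (1/p) \<le> epowr G (1/p) + epowr (D * F) (1/p)"
  shows "epowr F' (1/p) \<le> epowr (1 / K) (1/p) * epowr G (1/p) + epowr (D / K) (1/p) * epowr F (1/p)"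
proof -
  have tp: "1/p > 0" using p by simp
  have "epowr F' (1/p) = epowr (1 / K * (K * F')) (1/p)" using inv_K_cancel[OF K] by simp
  also have "\<dots> = epowr (1 / K) (1/p) * epowr (K * F') (1/p)" by (rule epowr_mult[OF tp])
  also have "\<dots> \<le> epowr (1 / K) (1/p) * (epowr G (1/p) + epowr (D * F) (1/p))"
    by (rule mult_left_mono[OF st]) simp
  also have "\<dots> = epowr (1 / K) (1/p) * epowr G (1/p) + epowr (1 / K * (D * F)) (1/p)"
    by (simp add: distrib_left epowr_mult[OF tp])
  also have "1 / K * (D * F) = (D / K) * F"
    by (simp add: divide_ennreal_def mult.commute mult.left_commute)
  also have "epowr (D / K * F) (1/p) = epowr (D / K) (1/p) * epowr F (1/p)"
    by (rule epowr_mult[OF tp])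
  finally show ?thesis .
qed

definition acoef :: "real \<Rightarrow> (nat \<Rightarrow> ennreal) \<Rightarrow> (nat \<Rightarrow> ennreal) \<Rightarrow> nat \<Rightarrow> nat \<Rightarrow> ennreal" where
  "acoef p K D m k = epowr (1 / K (k - 1)) (1/p) * epowr (\<Prod>i=k..<m. D i / K i) (1/p)"

lemma unroll:
  fixes \<phi> g :: "nat \<Rightarrow> ennreal" and K D :: "nat \<Rightarrow> ennreal"
  assumes p: "1 \<le> p" and z: "\<phi> 0 = 0"
    and rec: "\<And>m. m < n \<Longrightarrow> \<phi> (Suc m) \<le> epowr (1 / K m) (1/p) * g (Suc m) + epowr (D m / K m) (1/p) * \<phi> m"
  shows "m \<le> n \<Longrightarrow> \<phi> m \<le> (\<Sum>k=1..m. acoef p K D m k * g k)"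
proof (induction m)
  case 0
  then show ?case using z by simp
next
  case (Suc m)
  have tp: "1/p > 0" using p by simp
  have IH: "\<phi> m \<le> (\<Sum>k=1..m. acoef p K D m k * g k)" using Suc by simp
  have "\<phi> (Suc m) \<le> epowr (1 / K m) (1/p) * g (Suc m) + epowr (D m / K m) (1/p) * \<phi> m"
    using Suc.prems by (intro rec) simp
  also have "\<dots> \<le> epowr (1 / K m) (1/p) * g (Suc m) + epowr (D m / K m) (1/p) * (\<Sum>k=1..m. acoef p K D m k * g k)"
    by (intro add_left_mono mult_left_mono IH) simp
  also have "epowr (D m / K m) (1/p) * (\<Sum>k=1..m. acoef p K D m k * g k) = (\<Sum>k=1..m. acoef p K D (Suc m) k * g k)"
    unfolding sum_distrib_left
  proof (rule sum.cong)
    fix k assume k: "k \<in> {1..m}"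
    have "(\<Prod>i=k..<Suc m. D i / K i) = (\<Prod>i=k..<m. D i / K i) * (D m / K m)"
      using k by (simp add: prod.atLeastLessThan_Suc)
    then show "epowr (D m / K m) (1/p) * (acoef p K D m k * g k) = acoef p K D (Suc m) k * g k"
      unfolding acoef_def by (simp add: epowr_mult[OF tp] mult.commute mult.left_commute)
  qed simp
  also have "epowr (1 / K m) (1/p) * g (Suc m) + (\<Sum>k=1..m. acoef p K D (Suc m) k * g k)
      = (\<Sum>k=1..Suc m. acoef p K D (Suc m) k * g k)"
    by (simp add: acoef_def add.commute)
  finally show ?case .
qed



lemma tri_swap:
  fixes X :: "nat \<Rightarrow> nat \<Rightarrow> 'a::comm_monoid_add"
  shows "(\<Sum>m=1..n. \<Sum>k=1..m. X m k) = (\<Sum>k=1..n. \<Sum>m=k..n. X m k)"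
proof (induction n)
  case 0 then show ?case by simp
next
  case (Suc n)
  have "(\<Sum>m=1..Suc n. \<Sum>k=1..m. X m k) = (\<Sum>k=1..n. \<Sum>m=k..n. X m k) + (\<Sum>k=1..Suc n. X (Suc n) k)"
    using Suc by simp
  also have "\<dots> = (\<Sum>k=1..n. (\<Sum>m=k..n. X m k) + X (Suc n) k) + X (Suc n) (Suc n)"
    by (simp add: sum.distrib add.assoc)
  also have "(\<Sum>k=1..n. (\<Sum>m=k..n. X m k) + X (Suc n) k) = (\<Sum>k=1..n. \<Sum>m=k..Suc n. X m k)"
    by (rule sum.cong) (auto simp: sum.cl_ivl_Suc)
  also have "(\<Sum>k=1..n. \<Sum>m=k..Suc n. X m k) + X (Suc n) (Suc n) = (\<Sum>k=1..Suc n. \<Sum>m=k..Suc n. X m k)"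
    by (simp add: sum.cl_ivl_Suc[of _ 1 "n"])
  finally show ?case .
qed

lemma ind_sum_le1:
  fixes S :: "nat \<Rightarrow> 'v set"
  assumes S_disj: "\<And>i j. i \<le> n \<Longrightarrow> j \<le> n \<Longrightarrow> i \<noteq> j \<Longrightarrow> S i \<inter> S j = {}"
  shows "(\<Sum>k=1..n. indicator (S (k - 1)) u * indicator (S k) v) \<le> (1::ennreal)"
proof (cases "\<exists>k0\<in>{1..n}. u \<in> S (k0 - 1)")
  case True
  then obtain k0 where k0: "k0 \<in> {1..n}" "u \<in> S (k0 - 1)" by auto
  have "(\<Sum>k=1..n. indicator (S (k - 1)) u * indicator (S k) v)
      = indicator (S (k0 - 1)) u * indicator (S k0) v + (\<Sum>k\<in>{1..n} - {k0}. indicator (S (k - 1)) u * indicator (S k) v)"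
    using k0 by (subst sum.remove[of _ k0]) auto
  also have "(\<Sum>k\<in>{1..n} - {k0}. indicator (S (k - 1)) u * indicator (S k) v) = (0::ennreal)"
  proof (rule sum.neutral, rule ballI)
    fix k assume k: "k \<in> {1..n} - {k0}"
    have "k - 1 \<noteq> k0 - 1" using k k0 by auto
    then have "S (k - 1) \<inter> S (k0 - 1) = {}" by (intro S_disj) (use k k0 in auto)
    then have "u \<notin> S (k - 1)" using k0 by auto
    then show "indicator (S (k - 1)) u * indicator (S k) v = (0::ennreal)" by simp
  qed
  finally show ?thesis by (simp add: indicator_def)
next
  case False
  then have "(\<Sum>k=1..n. indicator (S (k - 1)) u * indicator (S k) v) = (0::ennreal)"
    by (intro sum.neutral) auto
  then show ?thesis by simp
qed

lemma G_sum_le: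
  fixes w :: "'v::countable \<Rightarrow> 'v \<Rightarrow> real" and S :: "nat \<Rightarrow> 'v set"
  assumes S_disj: "\<And>i j. i \<le> n \<Longrightarrow> j \<le> n \<Longrightarrow> i \<noteq> j \<Longrightarrow> S i \<inter> S j = {}"
  shows "(\<Sum>k=1..n. GG w p (S (k - 1)) (S k) f)
     \<le> csum (\<lambda>x. ennreal (w (fst x) (snd x)) * ennreal (\<bar>f (fst x) - f (snd x)\<bar> powr p))"
proof -
  have "(\<Sum>k=1..n. GG w p (S (k - 1)) (S k) f)
     = csum (\<lambda>x. \<Sum>k=1..n. cw w (S (k - 1)) (S k) x * ennreal (\<bar>f (fst x) - f (snd x)\<bar> powr p))"
    unfolding GG_def by (rule nn_integral_sum[symmetric]) simp
  also have "\<dots> \<le> csum (\<lambda>x. ennreal (w (fst x) (snd x)) * ennreal (\<bar>f (fst x) - f (snd x)\<bar> powr p))"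
  proof (rule nn_integral_mono)
    fix x :: "'v \<times> 'v"
    have "(\<Sum>k=1..n. cw w (S (k - 1)) (S k) x * ennreal (\<bar>f (fst x) - f (snd x)\<bar> powr p))
       = (\<Sum>k=1..n. indicator (S (k - 1)) (fst x) * indicator (S k) (snd x)) * (ennreal (w (fst x) (snd x)) * ennreal (\<bar>f (fst x) - f (snd x)\<bar> powr p))"
      unfolding cw_def sum_distrib_right by (simp add: mult.assoc)
    also have "\<dots> \<le> 1 * (ennreal (w (fst x) (snd x)) * ennreal (\<bar>f (fst x) - f (snd x)\<bar> powr p))"
      by (intro mult_right_mono ind_sum_le1[OF S_disj]) auto
    finally show "(\<Sum>k=1..n. cw w (S (k - 1)) (S k) x * ennreal (\<bar>f (fst x) - f (snd x)\<bar> powr p))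
       \<le> ennreal (w (fst x) (snd x)) * ennreal (\<bar>f (fst x) - f (snd x)\<bar> powr p)" by simp
  qed
  finally show ?thesis .
qed

lemma cover_le:
  fixes S :: "nat \<Rightarrow> 'v set" and h :: "'v \<Rightarrow> ennreal"
  assumes S_cover: "(\<Union>m\<le>n. S m) = UNIV"
  shows "csum (\<lambda>v. indicator (UNIV - S 0) v * h v) \<le> (\<Sum>m=1..n. csum (\<lambda>v. indicator (S m) v * h v))"
proof -
  have "csum (\<lambda>v. indicator (UNIV - S 0) v * h v) \<le> csum (\<lambda>v. \<Sum>m=1..n. indicator (S m) v * h v)"
  proof (rule nn_integral_mono)
    fix v
    show "indicator (UNIV - S 0) v * h v \<le> (\<Sum>m=1..n. indicator (S m) v * h v)"
    proof (cases "v \<in> S 0")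
      case True then show ?thesis by simp
    next
      case False
      from S_cover obtain m where m: "m \<le> n" "v \<in> S m" by blast
      with False have "m \<in> {1..n}" by (cases m) auto
      then have "indicator (S m) v * h v \<le> (\<Sum>m=1..n. indicator (S m) v * h v)"
        by (intro member_le_sum) auto
      then show ?thesis using m False by simp
    qed
  qed
  also have "\<dots> = (\<Sum>m=1..n. csum (\<lambda>v. indicator (S m) v * h v))"
    by (rule nn_integral_sum) simp
  finally show ?thesis .
qed

lemma sup_part:
  fixes w :: "'v::countable \<Rightarrow> 'v \<Rightarrow> real" and \<nu> :: "'v \<Rightarrow> real"
    and S :: "nat \<Rightarrow> 'v set" and n :: nat
  assumes S_cover: "(\<Union>m\<le>n. S m) = UNIV"
    and K_pos: "\<And>m. m < n \<Longrightarrow> 0 < Km w \<nu> S m \<and> Km w \<nu> S m < top"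
    and f0: "\<forall>v\<in>S 0. f v = 0"
  shows "sup_norm (UNIV - S 0) f \<le> of_nat n * grad_sup_norm w f"
proof -
  let ?g = "grad_sup_norm w f"
  have edge: "ennreal \<bar>f u - f v\<bar> \<le> ?g" if "w u v > 0" for u v
    unfolding grad_sup_norm_def using that
    by (intro SUP_upper2[of "(u, v)"]) auto
  have claim: "m \<le> n \<Longrightarrow> v \<in> S m \<Longrightarrow> ennreal \<bar>f v\<bar> \<le> of_nat m * ?g" for m v
  proof (induction m arbitrary: v)
    case 0
    then show ?case using f0 by simp
  next
    case (Suc m)
    have "0 < Km w \<nu> S m" using K_pos Suc.prems by simp
    also have "Km w \<nu> S m \<le> wA w (S m) v / ennreal (\<nu> v)"
      unfolding Km_def using Suc.prems by (intro INF_lower) auto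
    finally have "wA w (S m) v \<noteq> 0" by auto
    then have "\<exists>u\<in>S m. ennreal (w u v) \<noteq> 0"
      unfolding wA_def by (metis (mono_tags, lifting) infsum_0)
    then obtain u where u: "u \<in> S m" "w u v > 0" by (auto simp: ennreal_eq_0_iff not_le)
    have "ennreal \<bar>f v\<bar> \<le> ennreal (\<bar>f u\<bar> + \<bar>f u - f v\<bar>)"
      by (intro ennreal_leI) linarith
    also have "\<dots> = ennreal \<bar>f u\<bar> + ennreal \<bar>f u - f v\<bar>" by (rule ennreal_plus) auto
    also have "\<dots> \<le> of_nat m * ?g + ?g"
      using Suc.IH[of u] Suc.prems u edge[of u v] by (intro add_mono) auto
    also have "\<dots> = of_nat (Suc m) * ?g" by (simp add: distrib_right)
    finally show ?case .
  qed
  show ?thesis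
    unfolding sup_norm_def
  proof (rule SUP_least)
    fix v assume "v \<in> UNIV - S 0"
    from S_cover obtain m where m: "m \<le> n" "v \<in> S m" by blast
    have "ennreal \<bar>f v\<bar> \<le> of_nat m * ?g" by (rule claim[OF m])
    also have "\<dots> \<le> of_nat n * ?g" using m by (intro mult_right_mono) auto
    finally show "ennreal \<bar>f v\<bar> \<le> of_nat n * ?g" .
  qed
qed



theorem corollary1p5:
  fixes w :: "'v::countable \<Rightarrow> 'v \<Rightarrow> real" and \<nu> :: "'v \<Rightarrow> real"
    and S :: "nat \<Rightarrow> 'v set" and n :: nat
  assumes w_nonneg: "\<And>u v. 0 \<le> w u v"
    and w_sym: "\<And>u v. w u v = w v u"
    and w_diag: "\<And>u. w u u = 0"
    and \<nu>_pos: "\<And>v. 0 < \<nu> v"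
    and S_cover: "(\<Union>m\<le>n. S m) = UNIV"
    and S_disj: "\<And>i j. i \<le> n \<Longrightarrow> j \<le> n \<Longrightarrow> i \<noteq> j \<Longrightarrow> S i \<inter> S j = {}"
    and K_pos: "\<And>m. m < n \<Longrightarrow> 0 < Km w \<nu> S m \<and> Km w \<nu> S m < top"
  shows "(\<forall>p f. 1 \<le> p \<longrightarrow> pnorm \<nu> p UNIV f < top \<longrightarrow> (\<forall>v\<in>S 0. f v = 0) \<longrightarrow>
            pnorm \<nu> p (UNIV - S 0) f \<le> delta w \<nu> S n p * grad_pnorm w p f)
       \<and> (\<forall>f. bounded (range f) \<longrightarrow> (\<forall>v\<in>S 0. f v = 0) \<longrightarrow>
            sup_norm (UNIV - S 0) f \<le> of_nat n * grad_sup_norm w f)"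
proof (intro conjI allI impI)
  fix f :: "'v \<Rightarrow> real"
  assume "\<forall>v\<in>S 0. f v = 0"
  then show "sup_norm (UNIV - S 0) f \<le> of_nat n * grad_sup_norm w f"
    using sup_part[where n=n and S=S and w=w and \<nu>=\<nu> and f=f] S_cover K_pos by blast
next
  fix p :: real and f :: "'v \<Rightarrow> real"
  assume p: "1 \<le> p" and f0: "\<forall>v\<in>S 0. f v = 0"
  have tp: "1/p > 0" "p > 0" using p by auto
  define \<Phi> where "\<Phi> m = epowr (FF \<nu> p (S m) f) (1/p)" for m
  define g where "g k = epowr (GG w p (S (k - 1)) (S k) f) (1/p)" for k
  define T where "T = csum (\<lambda>x. ennreal (w (fst x) (snd x)) * ennreal (\<bar>f (fst x) - f (snd x)\<bar> powr p))"
  have Tgrad: "grad_pnorm w p f = epowr T (1/p)"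
  proof -
    have "(\<Sum>\<^sub>\<infinity> (u,v)\<in>UNIV. ennreal (\<bar>f u - f v\<bar> powr p * w u v)) = T"
      unfolding T_def infsum_UNIV_nn
      by (intro nn_integral_cong) (auto simp: w_nonneg ennreal_mult mult.commute)
    then show ?thesis unfolding grad_pnorm_def by simp
  qed
  have LHS: "pnorm \<nu> p (UNIV - S 0) f \<le> epowr (\<Sum>m=1..n. FF \<nu> p (S m) f) (1/p)"
    unfolding pnorm_def FF_def infsum_nn
    by (intro epowr_mono[OF tp(1)] cover_le[OF S_cover])
  have gp: "epowr (g k) p = GG w p (S (k - 1)) (S k) f" for k
    unfolding g_def epowr_epowr using tp by simp
  have Gle: "(\<Sum>k=1..n. epowr (g k) p) \<le> T"
    unfolding gp T_def by (rule G_sum_le[OF S_disj])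
  have Phi0: "\<Phi> 0 = 0"
  proof -
    have "FF \<nu> p (S 0) f = 0" unfolding FF_def
      using f0 by (simp add: csum_0_iff indicator_def)
    then show ?thesis unfolding \<Phi>_def by simp
  qed
  have rec: "\<Phi> (Suc m) \<le> epowr (1 / Km w \<nu> S m) (1/p) * g (Suc m) + epowr (Dm w \<nu> S m / Km w \<nu> S m) (1/p) * \<Phi> m"
    if "m < n" for m
    unfolding \<Phi>_def g_def
    using rec_lemma[OF conjunct1[OF K_pos[OF that]] conjunct2[OF K_pos[OF that]] p
        step_lemma[where S=S and m=m and f=f, OF w_nonneg w_sym \<nu>_pos p]] by simp
  have unr: "\<Phi> m \<le> (\<Sum>k=1..m. acoef p (Km w \<nu> S) (Dm w \<nu> S) m k * g k)" if "m \<le> n" for m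
    by (rule unroll[OF p Phi0 rec that])
  have FPhi: "FF \<nu> p (S m) f = epowr (\<Phi> m) p" for m
    unfolding \<Phi>_def epowr_epowr using tp by simp
  show "pnorm \<nu> p (UNIV - S 0) f \<le> delta w \<nu> S n p * grad_pnorm w p f"
  proof (cases "p = 1")
    case True
    have a1: "acoef p (Km w \<nu> S) (Dm w \<nu> S) m k = 1 / Km w \<nu> S (k - 1) * (\<Prod>i=k..<m. Dm w \<nu> S i / Km w \<nu> S i)" for m k
      unfolding acoef_def using True by simp
    have "pnorm \<nu> p (UNIV - S 0) f \<le> (\<Sum>m=1..n. \<Phi> m)"
      using LHS True by (simp add: \<Phi>_def)
    also have "\<dots> \<le> (\<Sum>m=1..n. \<Sum>k=1..m. acoef p (Km w \<nu> S) (Dm w \<nu> S) m k * g k)"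
      by (intro sum_mono unr) auto
    also have "\<dots> = (\<Sum>k=1..n. \<Sum>m=k..n. acoef p (Km w \<nu> S) (Dm w \<nu> S) m k * g k)"
      by (rule tri_swap)
    also have "\<dots> = (\<Sum>k=1..n. (1 / Km w \<nu> S (k - 1) * (\<Sum>m=k..n. \<Prod>i=k..<m. Dm w \<nu> S i / Km w \<nu> S i)) * g k)"
      unfolding a1 by (simp add: sum_distrib_left sum_distrib_right)
    also have "\<dots> \<le> (\<Sum>k=1..n. delta w \<nu> S n p * g k)"
    proof (rule sum_mono)
      fix k assume k: "k \<in> {1..n}"
      have "1 / Km w \<nu> S (k - 1) * (\<Sum>m=k..n. \<Prod>i=k..<m. Dm w \<nu> S i / Km w \<nu> S i) \<le> delta w \<nu> S n p"
      proof -
        have "delta w \<nu> S n p = (SUP k\<in>{1..n}. (1 / Km w \<nu> S (k - 1)) * (\<Sum>m=k..n. \<Prod>i=k..<m. Dm w \<nu> S i / Km w \<nu> S i))"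
          unfolding delta_def using True by (simp add: Let_def)
        then show ?thesis using k by (simp only:) (rule SUP_upper)
      qed
      then show "(1 / Km w \<nu> S (k - 1) * (\<Sum>m=k..n. \<Prod>i=k..<m. Dm w \<nu> S i / Km w \<nu> S i)) * g k \<le> delta w \<nu> S n p * g k"
        by (rule mult_right_mono) simp
    qed
    also have "\<dots> = delta w \<nu> S n p * (\<Sum>k=1..n. g k)" by (simp add: sum_distrib_left)
    also have "\<dots> \<le> delta w \<nu> S n p * T"
      using Gle True by (intro mult_left_mono) auto
    also have "\<dots> = delta w \<nu> S n p * grad_pnorm w p f"
      using Tgrad True by simp
    finally show ?thesis .
  next
    case False
    then have p1: "p > 1" using p by simp
    define q where "q = p / (p - 1)"
    have q: "q > 1" "1/p + 1/q = 1" using p1 unfolding q_def by (auto simp: field_simps)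
    define C where "C m = (\<Sum>k=1..m. epowr (acoef p (Km w \<nu> S) (Dm w \<nu> S) m k) q)" for m
    have Fm: "FF \<nu> p (S m) f \<le> epowr (C m) (p/q) * T" if m: "m \<in> {1..n}" for m
    proof -
      have "\<Phi> m \<le> (\<Sum>k=1..m. acoef p (Km w \<nu> S) (Dm w \<nu> S) m k * g k)"
        using m by (intro unr) auto
      also have "\<dots> \<le> epowr (C m) (1/q) * epowr (\<Sum>k=1..m. epowr (g k) p) (1/p)"
        unfolding C_def by (rule holder_ennreal) (use p1 q in auto)
      also have "\<dots> \<le> epowr (C m) (1/q) * epowr T (1/p)"
      proof (intro mult_left_mono epowr_mono[OF tp(1)])
        have "(\<Sum>k=1..m. epowr (g k) p) \<le> (\<Sum>k=1..n. epowr (g k) p)"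
          using m by (intro sum_mono2) auto
        then show "(\<Sum>k=1..m. epowr (g k) p) \<le> T" using Gle by simp
      qed simp
      finally have "epowr (\<Phi> m) p \<le> epowr (epowr (C m) (1/q) * epowr T (1/p)) p"
        by (rule epowr_mono[OF tp(2)])
      also have "\<dots> = epowr (C m) (p/q) * T"
        using tp by (simp add: epowr_mult epowr_epowr)
      finally show ?thesis unfolding FPhi .
    qed
    have "pnorm \<nu> p (UNIV - S 0) f \<le> epowr (\<Sum>m=1..n. FF \<nu> p (S m) f) (1/p)" by (rule LHS)
    also have "\<dots> \<le> epowr ((\<Sum>m=1..n. epowr (C m) (p/q)) * T) (1/p)"
      by (intro epowr_mono[OF tp(1)]) (auto simp: sum_distrib_right intro!: sum_mono Fm)
    also have "\<dots> = epowr (\<Sum>m=1..n. epowr (C m) (p/q)) (1/p) * grad_pnorm w p f"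
      using tp by (simp add: epowr_mult Tgrad)
    also have "epowr (\<Sum>m=1..n. epowr (C m) (p/q)) (1/p) = delta w \<nu> S n p"
    proof -
      have "C m = (\<Sum>k=1..m. epowr (1 / Km w \<nu> S (k - 1)) (q/p) * epowr (\<Prod>i=k..<m. Dm w \<nu> S i / Km w \<nu> S i) (q/p))" for m
        unfolding C_def acoef_def using tp q by (simp add: epowr_mult epowr_epowr)
      then show ?thesis unfolding delta_def using False by (simp add: Let_def q_def)
    qed
    finally show ?thesis .
  qed
qed

end
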